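(* Let $(f_t(x))_{t\in[0,1]}$ be a smooth family of strictly positive probability densities on $\mathbb R$, and suppose there exist a constant $v$ and a non-decreasing continuously differentiable function $\alpha:[0,1]\to\mathbb R$ such that, with $$g_t(x):=vf_t(x)+\alpha(t)\frac{\partial f_t}{\partial x}(x),$$ we have $\frac{\partial f_t}{\partial t}=-\frac{\partial g_t}{\partial x}$. Let $$h_t(x):=v^2f_t(x)+2v\alpha(t)\frac{\partial f_t}{\partial x}(x)+\alpha(t)^2\frac{\partial^2 f_t}{\partial x^2}(x)-\alpha'(t)f_t(x).$$ Assume the following technical conditions: (a) there exist integrable $\theta_A,\theta_B$ with $\left|\frac{\partial g_t}{\partial x}(1+\log f_t)\right|\le\theta_A(x)$ and $\left|\frac{\partial^2 h_t}{\partial x^2}\log f_t+\left(\frac{\partial g_t}{\partial x}\right)^2\frac1{f_t}\right|\le\theta_B(x)$ for all $t,x$; (b) for each $t$ the functions $g_t$, $\frac{\partial h_t}{\partial x}\log f_t$, $\frac{h_t}{f_t}\frac{\partial f_t}{\partial x}$, $\left(\frac{g_t}{f_t}\right)^2\frac{\partial f_t}{\partial x}$ vanish as $x\to\pm\infty$; and the entropy $H(t)=-\int f_t\log f_t\,dx$ exists for all $t$. Then $H$ is a concave function of $t$ on $[0,1]$. *)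

theory Defs
  imports "HOL-Analysis.Analysis"
begin

definition pdx :: "(real \<Rightarrow> real \<Rightarrow> real) \<Rightarrow> real \<Rightarrow> real \<Rightarrow> real" where
  "pdx u t x = deriv (\<lambda>y. u t y) x"

text \<open>Joint C-infinity smoothness of a two-variable function on a set S of the plane
  (derivatives taken within S): there is a family of functions containing u that is
  closed under taking both partial derivatives, each member being (Frechet)
  differentiable on S with the indicated partial derivatives.\<close>
definition smooth2_on :: "(real \<times> real) set \<Rightarrow> (real \<Rightarrow> real \<Rightarrow> real) \<Rightarrow> bool" where
  "smooth2_on S u \<longleftrightarrow>
     (\<exists>F. u \<in> F \<and>
        (\<forall>w\<in>F. \<exists>wt wx. wt \<in> F \<and> wx \<in> F \<and>
           (\<forall>p\<in>S. ((\<lambda>q. w (fst q) (snd q)) has_derivative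
                      (\<lambda>d. wt (fst p) (snd p) * fst d + wx (fst p) (snd p) * snd d))
                    (at p within S))))"

definition gfun :: "real \<Rightarrow> (real \<Rightarrow> real) \<Rightarrow> (real \<Rightarrow> real \<Rightarrow> real) \<Rightarrow> real \<Rightarrow> real \<Rightarrow> real" where
  "gfun v \<alpha> f t x = v * f t x + \<alpha> t * pdx f t x"

definition hfun :: "real \<Rightarrow> (real \<Rightarrow> real) \<Rightarrow> (real \<Rightarrow> real) \<Rightarrow> (real \<Rightarrow> real \<Rightarrow> real)
                     \<Rightarrow> real \<Rightarrow> real \<Rightarrow> real" where
  "hfun v \<alpha> \<alpha>' f t x = v\<^sup>2 * f t x + 2 * v * \<alpha> t * pdx f t x
                        + (\<alpha> t)\<^sup>2 * pdx (pdx f) t x - \<alpha>' t * f t x"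

definition entropy :: "(real \<Rightarrow> real \<Rightarrow> real) \<Rightarrow> real \<Rightarrow> real" where
  "entropy f t = - (LINT x|lborel. f t x * ln (f t x))"

definition vanishes_at_infinity :: "(real \<Rightarrow> real) \<Rightarrow> bool" where
  "vanishes_at_infinity u \<longleftrightarrow> (u \<longlongrightarrow> 0) at_top \<and> (u \<longlongrightarrow> 0) at_bot"

end

theory Submission
  imports Defs
begin

definition S01 :: "(real \<times> real) set" where "S01 = {0..1} \<times> UNIV"

definition FP :: "(real \<Rightarrow> real \<Rightarrow> real) set \<Rightarrow> bool" where
  "FP F \<longleftrightarrow> (\<forall>w\<in>F. \<exists>wt wx. wt \<in> F \<and> wx \<in> F \<and>
           (\<forall>p\<in>S01. ((\<lambda>q. w (fst q) (snd q)) has_derivative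
                      (\<lambda>d. wt (fst p) (snd p) * fst d + wx (fst p) (snd p) * snd d))
                    (at p within S01)))"

definition smF :: "(real \<Rightarrow> real \<Rightarrow> real) set \<Rightarrow> (real \<Rightarrow> real \<Rightarrow> real) \<Rightarrow> bool" where
  "smF F u \<longleftrightarrow> (\<exists>w\<in>F. \<forall>t\<in>{0..1}. \<forall>x. u t x = w t x)"

lemma smooth_FP:
  assumes "smooth2_on ({0..1} \<times> UNIV) f"
  obtains F where "FP F" "smF F f"
  using assms unfolding smooth2_on_def FP_def smF_def S01_def by blast

lemma smF_x:
  assumes "FP F" "smF F u" "t \<in> {0..1}"
  shows "((\<lambda>y. u t y) has_real_derivative pdx u t x) (at x)" "smF F (pdx u)"
proof -
  from assms(2) obtain w where w: "w \<in> F" "\<And>t x. t \<in> {0..1} \<Longrightarrow> u t x = w t x"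
    unfolding smF_def by blast
  from assms(1) w(1) obtain wt wx where wt: "wt \<in> F" "wx \<in> F" and
    D: "\<And>p. p\<in>S01 \<Longrightarrow> ((\<lambda>q. w (fst q) (snd q)) has_derivative
                      (\<lambda>d. wt (fst p) (snd p) * fst d + wx (fst p) (snd p) * snd d))
                    (at p within S01)"
    unfolding FP_def by blast
  have key: "((\<lambda>y. w t y) has_real_derivative wx t y) (at y)" if t: "t \<in> {0..1}" for t y
  proof -
    have "((\<lambda>y. (t, y)) has_derivative (\<lambda>d. (0, d))) (at y within UNIV)"
      by (auto intro!: derivative_eq_intros)
    from has_derivative_in_compose2[OF D _ _ this]
    have "((\<lambda>z. w t z) has_derivative (\<lambda>d. wt t y * 0 + wx t y * d)) (at y)"
      using t by (force simp: S01_def)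
    then show ?thesis by (simp add: has_field_derivative_def mult.commute[of _ "wx t y"])
  qed
  have eq: "(\<lambda>y. u t y) = (\<lambda>y. w t y)" if "t \<in> {0..1}" for t using w(2) that by auto
  have pe: "pdx u t y = wx t y" if "t \<in> {0..1}" for t y
    unfolding pdx_def using eq[OF that] key[OF that] by (simp add: DERIV_imp_deriv)
  show "((\<lambda>y. u t y) has_real_derivative pdx u t x) (at x)"
    using key[OF assms(3)] eq[OF assms(3)] pe[OF assms(3)] by simp
  show "smF F (pdx u)" unfolding smF_def using wt pe by blast
qed

lemma smF_t:
  assumes "FP F" "smF F u"
  obtains ut where "smF F ut"
    "\<And>t x. t \<in> {0..1} \<Longrightarrow> ((\<lambda>s. u s x) has_real_derivative ut t x) (at t within {0..1})"
proof -
  from assms(2) obtain w where w: "w \<in> F" "\<And>t x. t \<in> {0..1} \<Longrightarrow> u t x = w t x"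
    unfolding smF_def by blast
  from assms(1) w(1) obtain wt wx where wt: "wt \<in> F" "wx \<in> F" and
    D: "\<And>p. p\<in>S01 \<Longrightarrow> ((\<lambda>q. w (fst q) (snd q)) has_derivative
                      (\<lambda>d. wt (fst p) (snd p) * fst d + wx (fst p) (snd p) * snd d))
                    (at p within S01)"
    unfolding FP_def by blast
  have "((\<lambda>s. u s x) has_real_derivative wt t x) (at t within {0..1})" if t: "t \<in> {0..1}" for t x
  proof -
    have "((\<lambda>s. (s, x)) has_derivative (\<lambda>d. (d, 0))) (at t within {0..1})"
      by (auto intro!: derivative_eq_intros)
    from has_derivative_in_compose2[OF D _ _ this]
    have "((\<lambda>s. w s x) has_derivative (\<lambda>d. wt t x * d + wx t x * 0)) (at t within {0..1})"
      using t by (auto simp: S01_def)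
    then have "((\<lambda>s. w s x) has_real_derivative wt t x) (at t within {0..1})"
      by (simp add: has_field_derivative_def mult.commute[of _ "wt t x"])
    then show ?thesis
      by (rule has_field_derivative_transform_within[OF _ zero_less_one t]) (simp add: w(2))
  qed
  moreover have "smF F wt" unfolding smF_def using wt by blast
  ultimately show ?thesis using that by blast
qed

lemma smF_cont:
  assumes "FP F" "smF F u"
  shows "continuous_on S01 (\<lambda>p. u (fst p) (snd p))"
proof -
  from assms(2) obtain w where w: "w \<in> F" "\<And>t x. t \<in> {0..1} \<Longrightarrow> u t x = w t x"
    unfolding smF_def by blast
  from assms(1) w(1) obtain wt wx where
    D: "\<And>p. p\<in>S01 \<Longrightarrow> ((\<lambda>q. w (fst q) (snd q)) has_derivative
                      (\<lambda>d. wt (fst p) (snd p) * fst d + wx (fst p) (snd p) * snd d))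
                    (at p within S01)"
    unfolding FP_def by blast
  have "continuous_on S01 (\<lambda>q. w (fst q) (snd q))"
    by (rule has_derivative_continuous_on[OF D])
  then show ?thesis
    by (rule continuous_on_cong[THEN iffD1, rotated 2]) (auto simp: S01_def w(2))
qed


lemma cont_slice_t:
  assumes "continuous_on S01 (\<lambda>p. c (fst p) (snd p))"
  shows "continuous_on {0..1} (\<lambda>s. c s x)"
proof -
  have "continuous_on {0..1} ((\<lambda>p. c (fst p) (snd p)) \<circ> (\<lambda>s. (s, x)))"
    by (rule continuous_on_compose[OF _ continuous_on_subset[OF assms]])
       (auto intro!: continuous_intros simp: S01_def)
  then show ?thesis by (simp add: o_def)
qed

lemma cont_slice_x:
  assumes "continuous_on S01 (\<lambda>p. c (fst p) (snd p))" "t \<in> {0..1}"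
  shows "continuous_on UNIV (\<lambda>y. c t y)"
proof -
  have "continuous_on UNIV ((\<lambda>p. c (fst p) (snd p)) \<circ> (\<lambda>y. (t, y)))"
    by (rule continuous_on_compose[OF _ continuous_on_subset[OF assms(1)]])
       (use assms(2) in \<open>auto intro!: continuous_intros simp: S01_def\<close>)
  then show ?thesis by (simp add: o_def)
qed

lemma cont_swap_sub:
  assumes "continuous_on S01 (\<lambda>p. c (fst p) (snd p))" "0 \<le> a" "b \<le> 1"
  shows "continuous_on (UNIV \<times> {a..b}) (\<lambda>(y, s). c s y)"
proof -
  have "continuous_on (UNIV \<times> {a..b}) ((\<lambda>p. c (fst p) (snd p)) \<circ> (\<lambda>q. (snd q, fst q)))"
    by (rule continuous_on_compose[OF _ continuous_on_subset[OF assms(1)]])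
       (use assms in \<open>auto intro!: continuous_intros simp: S01_def\<close>)
  then show ?thesis by (simp add: o_def case_prod_beta)
qed

lemma ftc_t:
  assumes ud: "\<And>t. t\<in>{0..1} \<Longrightarrow> ((\<lambda>s. u s) has_real_derivative c t) (at t within {0..1})"
    and "0 \<le> a" "a \<le> b" "b \<le> 1"
  shows "(c has_integral (u b - u a)) {a..b}"
proof (rule fundamental_theorem_of_calculus[OF assms(3)])
  fix s assume s: "s \<in> {a..b}"
  then have "(u has_real_derivative c s) (at s within {0..1})" using ud assms by auto
  then have "(u has_real_derivative c s) (at s within {a..b})"
    by (rule has_field_derivative_subset) (use assms in auto)
  then show "(u has_vector_derivative c s) (at s within {a..b})"
    by (simp add: has_real_derivative_iff_has_vector_derivative)
qed

lemma mixed: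
  assumes F: "FP F" and su: "smF F u"
    and ud: "\<And>t x. t\<in>{0..1} \<Longrightarrow> ((\<lambda>s. u s x) has_real_derivative c t x) (at t within {0..1})"
    and cd: "\<And>t y. t\<in>{0..1} \<Longrightarrow> ((\<lambda>y. c t y) has_real_derivative c' t y) (at y)"
    and cc: "continuous_on S01 (\<lambda>p. c (fst p) (snd p))"
    and cc': "continuous_on S01 (\<lambda>p. c' (fst p) (snd p))"
    and t: "t \<in> {0..1}"
  shows "((\<lambda>s. pdx u s x) has_real_derivative c' t x) (at t within {0..1})"
proof -
  have rep: "u t y = u 0 y + integral {0..t} (\<lambda>s. c s y)" if t: "t \<in> {0..1}" for t y
  proof -
    have "((\<lambda>s. c s y) has_integral (u t y - u 0 y)) {0..t}"
      by (rule ftc_t[where u="\<lambda>s. u s y"]) (use ud t in auto)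
    then show ?thesis by (simp add: integral_unique)
  qed
  have der: "((\<lambda>y. u 0 y + integral {0..t} (\<lambda>s. c s y)) has_real_derivative
              (pdx u 0 y + integral {0..t} (\<lambda>s. c' s y))) (at y)" if t: "t \<in> {0..1}" for t y
  proof (rule DERIV_add)
    show "((\<lambda>y. u 0 y) has_real_derivative pdx u 0 y) (at y)"
      by (rule smF_x(1)[OF F su]) simp
    have "((\<lambda>y. integral (cbox 0 t) (\<lambda>s. c s y)) has_real_derivative
             integral (cbox 0 t) (\<lambda>s. c' s y)) (at y within UNIV)"
    proof (rule leibniz_rule_field_derivative)
      fix y s assume s: "s \<in> cbox 0 t"
      then have "s \<in> {0..1}" using t by (auto simp: cbox_interval)
      then show "((\<lambda>y. c s y) has_real_derivative c' s y) (at y within UNIV)" using cd by simp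
    next
      fix y
      have "continuous_on {0..t} (\<lambda>s. c s y)"
        by (rule continuous_on_subset[OF cont_slice_t[OF cc]]) (use t in auto)
      then show "(\<lambda>s. c s y) integrable_on cbox 0 t"
        by (simp add: cbox_interval integrable_continuous_interval)
    next
      show "continuous_on (UNIV \<times> cbox 0 t) (\<lambda>(y, s). c' s y)"
        unfolding cbox_interval by (rule cont_swap_sub[OF cc']) (use t in auto)
    qed (simp_all)
    then show "((\<lambda>y. integral {0..t} (\<lambda>s. c s y)) has_real_derivative
             integral {0..t} (\<lambda>s. c' s y)) (at y)" by (simp add: cbox_interval)
  qed
  have pe: "pdx u t y = pdx u 0 y + integral {0..t} (\<lambda>s. c' s y)" if t: "t \<in> {0..1}" for t y
  proof -
    have "((\<lambda>y. u t y) has_real_derivative pdx u t y) (at y)"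
      by (rule smF_x(1)[OF F su t])
    moreover have "(\<lambda>y. u t y) = (\<lambda>y. u 0 y + integral {0..t} (\<lambda>s. c s y))"
      using rep[OF t] by auto
    ultimately have "((\<lambda>y. u 0 y + integral {0..t} (\<lambda>s. c s y)) has_real_derivative pdx u t y) (at y)"
      by simp
    from DERIV_unique[OF this der[OF t, of y]] show ?thesis .
  qed
  have "((\<lambda>s. pdx u 0 x + integral {0..s} (\<lambda>r. c' r x)) has_real_derivative c' t x)
          (at t within {0..1})"
    using DERIV_add[OF DERIV_const integral_has_real_derivative[OF cont_slice_t[OF cc'] t]] by simp
  then show ?thesis
    by (rule has_field_derivative_transform_within[OF _ zero_less_one t]) (metis pe)
qed


locale setting =
  fixes F :: "(real \<Rightarrow> real \<Rightarrow> real) set" and f :: "real \<Rightarrow> real \<Rightarrow> real"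
    and v :: real and \<alpha> \<alpha>' :: "real \<Rightarrow> real"
  assumes FP: "FP F" and sf: "smF F f"
    and pos: "\<And>t x. t \<in> {0..1} \<Longrightarrow> f t x > 0"
    and ad: "\<And>t. t \<in> {0..1} \<Longrightarrow> (\<alpha> has_real_derivative \<alpha>' t) (at t within {0..1})"
    and ac: "continuous_on {0..1} \<alpha>'"
    and tr: "\<And>t x. t \<in> {0..1} \<Longrightarrow>
          ((\<lambda>s. f s x) has_real_derivative - pdx (gfun v \<alpha> f) t x) (at t within {0..1})"
begin

lemma sm1: "smF F (pdx f)" using smF_x(2)[OF FP sf, of 0] by simp
lemma sm2: "smF F (pdx (pdx f))" using smF_x(2)[OF FP sm1, of 0] by simp
lemma sm3: "smF F (pdx (pdx (pdx f)))" using smF_x(2)[OF FP sm2, of 0] by simp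
lemma sm4: "smF F (pdx (pdx (pdx (pdx f))))" using smF_x(2)[OF FP sm3, of 0] by simp

lemmas dx0 = smF_x(1)[OF FP sf]
lemmas dx1 = smF_x(1)[OF FP sm1]
lemmas dx2 = smF_x(1)[OF FP sm2]
lemmas dx3 = smF_x(1)[OF FP sm3]

lemmas c0 = smF_cont[OF FP sf]
lemmas c1 = smF_cont[OF FP sm1]
lemmas c2 = smF_cont[OF FP sm2]
lemmas c3 = smF_cont[OF FP sm3]
lemmas c4 = smF_cont[OF FP sm4]

lemma alpha_cont: "continuous_on {0..1} \<alpha>"
  using ad by (intro DERIV_continuous_on) auto

lemma calpha: "continuous_on S01 (\<lambda>p. \<alpha> (fst p))"
  by (rule continuous_on_compose2[OF alpha_cont continuous_on_fst]) (auto simp: S01_def)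

lemma calpha': "continuous_on S01 (\<lambda>p. \<alpha>' (fst p))"
  by (rule continuous_on_compose2[OF ac continuous_on_fst]) (auto simp: S01_def)

lemma gder: assumes t: "t \<in> {0..1}" shows "((\<lambda>y. gfun v \<alpha> f t y) has_real_derivative
      (v * pdx f t y + \<alpha> t * pdx (pdx f) t y)) (at y)"
  unfolding gfun_def by (auto intro!: derivative_eq_intros dx0[OF t] dx1[OF t] simp: algebra_simps)

lemma G1: "t \<in> {0..1} \<Longrightarrow> pdx (gfun v \<alpha> f) t x = v * pdx f t x + \<alpha> t * pdx (pdx f) t x"
  unfolding pdx_def[of "gfun v \<alpha> f"] using gder by (simp add: DERIV_imp_deriv)

lemma gder': "t \<in> {0..1} \<Longrightarrow> ((\<lambda>y. gfun v \<alpha> f t y) has_real_derivative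
      pdx (gfun v \<alpha> f) t y) (at y)"
  using gder G1 by simp

lemma hder: assumes t: "t \<in> {0..1}" shows "((\<lambda>y. hfun v \<alpha> \<alpha>' f t y) has_real_derivative
      (v\<^sup>2 * pdx f t y + 2 * v * \<alpha> t * pdx (pdx f) t y
         + (\<alpha> t)\<^sup>2 * pdx (pdx (pdx f)) t y - \<alpha>' t * pdx f t y)) (at y)"
  unfolding hfun_def by (auto intro!: derivative_eq_intros dx0[OF t] dx1[OF t] dx2[OF t] simp: algebra_simps)

lemma hx: "t \<in> {0..1} \<Longrightarrow> pdx (hfun v \<alpha> \<alpha>' f) t x =
      v\<^sup>2 * pdx f t x + 2 * v * \<alpha> t * pdx (pdx f) t x
         + (\<alpha> t)\<^sup>2 * pdx (pdx (pdx f)) t x - \<alpha>' t * pdx f t x"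
  unfolding pdx_def[of "hfun v \<alpha> \<alpha>' f"] using hder by (simp add: DERIV_imp_deriv)

lemma hxder: assumes t: "t \<in> {0..1}" shows "((\<lambda>y. pdx (hfun v \<alpha> \<alpha>' f) t y) has_real_derivative
      (v\<^sup>2 * pdx (pdx f) t y + 2 * v * \<alpha> t * pdx (pdx (pdx f)) t y
         + (\<alpha> t)\<^sup>2 * pdx (pdx (pdx (pdx f))) t y - \<alpha>' t * pdx (pdx f) t y)) (at y)"
  unfolding hx[OF t] by (auto intro!: derivative_eq_intros dx1[OF t] dx2[OF t] dx3[OF t] simp: algebra_simps)

lemma hxx: "t \<in> {0..1} \<Longrightarrow> pdx (pdx (hfun v \<alpha> \<alpha>' f)) t x =
      v\<^sup>2 * pdx (pdx f) t x + 2 * v * \<alpha> t * pdx (pdx (pdx f)) t x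
         + (\<alpha> t)\<^sup>2 * pdx (pdx (pdx (pdx f))) t x - \<alpha>' t * pdx (pdx f) t x"
  unfolding pdx_def[of "pdx (hfun v \<alpha> \<alpha>' f)"] using hxder by (simp add: DERIV_imp_deriv)

lemma dt0: "t \<in> {0..1} \<Longrightarrow> ((\<lambda>s. f s x) has_real_derivative
      - (v * pdx f t x + \<alpha> t * pdx (pdx f) t x)) (at t within {0..1})"
  using tr G1 by simp

lemma dt1: assumes t: "t \<in> {0..1}" shows "((\<lambda>s. pdx f s x) has_real_derivative
      - (v * pdx (pdx f) t x + \<alpha> t * pdx (pdx (pdx f)) t x)) (at t within {0..1})"
  apply (rule mixed[OF FP sf, where c="\<lambda>t x. - (v * pdx f t x + \<alpha> t * pdx (pdx f) t x)"])
  subgoal by (rule dt0)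
  subgoal premises p for t y by (auto intro!: derivative_eq_intros dx1[OF p] dx2[OF p] simp: algebra_simps)
  subgoal by (intro continuous_intros c1 c2 calpha)
  subgoal by (intro continuous_intros c2 c3 calpha)
  by (rule t)

lemma dt2: assumes t: "t \<in> {0..1}" shows "((\<lambda>s. pdx (pdx f) s x) has_real_derivative
      - (v * pdx (pdx (pdx f)) t x + \<alpha> t * pdx (pdx (pdx (pdx f))) t x)) (at t within {0..1})"
  apply (rule mixed[OF FP sm1, where c="\<lambda>t x. - (v * pdx (pdx f) t x + \<alpha> t * pdx (pdx (pdx f)) t x)"])
  subgoal by (rule dt1)
  subgoal premises p for t y by (auto intro!: derivative_eq_intros dx2[OF p] dx3[OF p] simp: algebra_simps)
  subgoal by (intro continuous_intros c2 c3 calpha)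
  subgoal by (intro continuous_intros c3 c4 calpha)
  by (rule t)

end


context setting
begin

definition "Aint t x = pdx (gfun v \<alpha> f) t x * (1 + ln (f t x))"
definition "Bint t x = pdx (pdx (hfun v \<alpha> \<alpha>' f)) t x * ln (f t x) + (pdx (gfun v \<alpha> f) t x)\<^sup>2 / f t x"
definition "Qf t y = pdx (hfun v \<alpha> \<alpha>' f) t y * ln (f t y) - hfun v \<alpha> \<alpha>' f t y / f t y * pdx f t y
     + (gfun v \<alpha> f t y / f t y)\<^sup>2 * pdx f t y - \<alpha>' t * pdx f t y"
definition "Pf t y = 2 * (\<alpha> t)\<^sup>2 * f t y * ((pdx (pdx f) t y * f t y - (pdx f t y)\<^sup>2) / (f t y)\<^sup>2)\<^sup>2
     + \<alpha>' t * (pdx f t y)\<^sup>2 / f t y"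

lemma Qder:
  assumes t: "t \<in> {0..1}"
  shows "((\<lambda>y. Qf t y) has_real_derivative (Bint t y - Pf t y)) (at y)"
proof -
  have p: "f t y > 0" using pos t by auto
  have p': "f t y \<noteq> 0" using p by simp
  show ?thesis
    unfolding Qf_def hx[OF t] hfun_def gfun_def
    apply (rule derivative_eq_intros dx0[OF t] dx1[OF t] dx2[OF t] dx3[OF t] refl p p')+
    using p' unfolding Bint_def Pf_def hxx[OF t] G1[OF t]
    apply (simp add: field_simps power2_eq_square)
    done
qed

lemma dA:
  assumes t: "t \<in> {0..1}"
  shows "((\<lambda>s. f s x * ln (f s x)) has_real_derivative - Aint t x) (at t within {0..1})"
proof -
  have p: "f t x > 0" using pos t by auto
  have p': "f t x \<noteq> 0" using p by simp
  show ?thesis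
    apply (rule derivative_eq_intros dt0[OF t] refl p p')+
    using p' unfolding Aint_def G1[OF t]
    by (simp add: field_simps)
qed

lemma dK:
  assumes t: "t \<in> {0..1}"
  shows "((\<lambda>s. pdx (gfun v \<alpha> f) s x * ln (f s x)) has_real_derivative - Bint t x) (at t within {0..1})"
proof -
  have p: "f t x > 0" using pos t by auto
  have p': "f t x \<noteq> 0" using p by simp
  have "((\<lambda>s. (v * pdx f s x + \<alpha> s * pdx (pdx f) s x) * ln (f s x)) has_real_derivative - Bint t x) (at t within {0..1})"
    apply (rule derivative_eq_intros dt0[OF t] dt1[OF t] dt2[OF t] ad[OF t] refl p p')+
    using p' unfolding Bint_def G1[OF t] hxx[OF t]
    by (simp add: field_simps power2_eq_square)
  then show ?thesis
    by (rule has_field_derivative_transform_within[OF _ zero_less_one t]) (simp add: G1)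
qed

lemma pS: "p \<in> S01 \<Longrightarrow> f (fst p) (snd p) \<noteq> 0"
  using pos[of "fst p" "snd p"] by (auto simp: S01_def)

lemma cA: "continuous_on S01 (\<lambda>p. Aint (fst p) (snd p))"
proof -
  have "continuous_on S01 (\<lambda>p. (v * pdx f (fst p) (snd p) + \<alpha> (fst p) * pdx (pdx f) (fst p) (snd p))
            * (1 + ln (f (fst p) (snd p))))"
    by (intro continuous_intros c0 c1 c2 calpha) (auto dest: pS)
  then show ?thesis
    by (rule continuous_on_cong[THEN iffD1, rotated 2]) (auto simp: S01_def Aint_def G1)
qed

lemma cB: "continuous_on S01 (\<lambda>p. Bint (fst p) (snd p))"
proof -
  have "continuous_on S01 (\<lambda>p. (v\<^sup>2 * pdx (pdx f) (fst p) (snd p) + 2 * v * \<alpha> (fst p) * pdx (pdx (pdx f)) (fst p) (snd p)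
         + (\<alpha> (fst p))\<^sup>2 * pdx (pdx (pdx (pdx f))) (fst p) (snd p) - \<alpha>' (fst p) * pdx (pdx f) (fst p) (snd p))
            * ln (f (fst p) (snd p)) + (v * pdx f (fst p) (snd p) + \<alpha> (fst p) * pdx (pdx f) (fst p) (snd p))\<^sup>2 / f (fst p) (snd p))"
    by (intro continuous_intros c0 c1 c2 c3 c4 calpha calpha') (auto dest: pS)
  then show ?thesis
    by (rule continuous_on_cong[THEN iffD1, rotated 2]) (auto simp: S01_def Bint_def G1 hxx)
qed

lemma Pf_nonneg: "0 \<le> \<alpha>' t \<Longrightarrow> t \<in> {0..1} \<Longrightarrow> 0 \<le> Pf t y"
  unfolding Pf_def using pos[of t y] by (intro add_nonneg_nonneg mult_nonneg_nonneg divide_nonneg_pos) auto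

end

lemma mono_deriv_nonneg:
  assumes "mono_on {0..1::real} g" "(g has_real_derivative D) (at t within {0..1})" "t \<in> {0..1}"
  shows "D \<ge> 0"
proof -
  have lim: "((\<lambda>y. (g y - g t) / (y - t)) \<longlongrightarrow> D) (at t within {0..1})"
    using assms(2) by (simp add: has_field_derivative_iff)
  have ev: "eventually (\<lambda>y. (g y - g t) / (y - t) \<ge> 0) (at t within {0..1})"
    unfolding eventually_at_filter
  proof (rule always_eventually, intro allI impI)
    fix y assume y: "y \<noteq> t" "y \<in> {0..1}"
    show "(g y - g t) / (y - t) \<ge> 0"
    proof (cases "y < t")
      case True
      then have "g y \<le> g t" using mono_onD[OF assms(1)] y assms(3) by auto
      then show ?thesis using True by (intro divide_nonpos_neg) auto
    next
      case False
      then have "g t \<le> g y" using mono_onD[OF assms(1)] y assms(3) by auto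
      then show ?thesis using False y by (intro divide_nonneg_pos) auto
    qed
  qed
  have nb: "at t within {0..1} \<noteq> bot"
    using assms(3) trivial_limit_within[of t "{0..1::real}"] by auto
  show ?thesis by (rule tendsto_lowerbound[OF lim ev nb])
qed


lemma int_as_lint:
  fixes u :: "real \<Rightarrow> real"
  assumes int: "integrable lborel u"
  shows "integral {a..b} u = (LINT x|lborel. indicator {a..b} x * u x)"
proof -
  have si: "set_integrable lborel {a..b} u"
    unfolding set_integrable_def by (rule integrable_mult_indicator) (auto simp: int)
  show ?thesis using set_borel_integral_eq_integral(2)[OF si] by (simp add: set_lebesgue_integral_def)
qed

lemma int_ivl_bound:
  fixes u :: "real \<Rightarrow> real"
  assumes int: "integrable lborel u" and th: "integrable lborel \<theta>" and bd: "\<And>x. \<bar>u x\<bar> \<le> \<theta> x"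
  shows "\<bar>integral {a..b} u\<bar> \<le> (LINT x|lborel. \<theta> x)"
proof -
  have i2: "integrable lborel (\<lambda>x. indicator {a..b} x * u x)"
    using integrable_mult_indicator[OF _ int, of "{a..b}"] by simp
  have "\<bar>integral {a..b} u\<bar> = \<bar>LINT x|lborel. indicator {a..b} x * u x\<bar>" by (simp add: int_as_lint[OF int])
  also have "\<dots> \<le> (LINT x|lborel. \<bar>indicator {a..b} x * u x\<bar>)"
    using integral_norm_bound[of lborel "\<lambda>x. indicator {a..b} x * u x"] by simp
  also have "\<dots> \<le> (LINT x|lborel. \<theta> x)"
    by (rule integral_mono) (use i2 th bd in \<open>auto split: split_indicator intro: order_trans[OF _ bd]\<close>)
  finally show ?thesis .
qed

lemma lim_ivl:
  fixes u :: "real \<Rightarrow> real"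
  assumes int: "integrable lborel u" and l: "filterlim l at_bot sequentially"
    and r: "filterlim r at_top sequentially"
  shows "(\<lambda>n. integral {l n..r n} u) \<longlonglongrightarrow> (LINT x|lborel. u x)"
proof -
  have "(\<lambda>n. LINT x|lborel. indicator {l n..r n} x * u x) \<longlonglongrightarrow> (LINT x|lborel. u x)"
  proof (rule integral_dominated_convergence[where w="\<lambda>x. norm (u x)"])
    show "u \<in> borel_measurable lborel" using int by auto
    show "(\<lambda>x. indicator {l i..r i} x * u x) \<in> borel_measurable lborel" for i
      using int by auto
    show "integrable lborel (\<lambda>x. norm (u x))" using int by auto
    show "AE x in lborel. (\<lambda>i. indicator {l i..r i} x * u x) \<longlonglongrightarrow> u x"
    proof (rule always_eventually, rule allI, rule tendsto_eventually)
      fix x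
      have "eventually (\<lambda>i. l i \<le> x) sequentially" using l by (simp add: filterlim_at_bot)
      moreover have "eventually (\<lambda>i. x \<le> r i) sequentially" using r by (simp add: filterlim_at_top)
      ultimately show "eventually (\<lambda>i. indicator {l i..r i} x * u x = u x) sequentially"
        by eventually_elim auto
    qed
    show "AE x in lborel. norm (indicator {l i..r i} x * u x) \<le> norm (u x)" for i
      by (auto split: split_indicator)
  qed
  then show ?thesis by (simp add: int_as_lint[OF int])
qed

lemma lim_nn: "(\<lambda>n. integral {- real n..real n} u) \<longlonglongrightarrow> (LINT x|lborel. u x)"
  if "integrable lborel u" for u :: "real \<Rightarrow> real"
  by (rule lim_ivl[OF that])
     (auto simp: filterlim_uminus_at_bot intro: filterlim_real_sequentially)

lemma slice_integrable:
  fixes G :: "real \<Rightarrow> real \<Rightarrow> real"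
  assumes cont: "continuous_on S01 (\<lambda>p. G (fst p) (snd p))"
    and th: "integrable lborel \<theta>"
    and bd: "\<And>s x. s \<in> {0..1} \<Longrightarrow> \<bar>G s x\<bar> \<le> \<theta> x"
    and s: "s \<in> {0..1}"
  shows "integrable lborel (G s)"
proof (rule Bochner_Integration.integrable_bound[OF th])
  show "G s \<in> borel_measurable lborel"
    using borel_measurable_continuous_onI[OF cont_slice_x[OF cont s]] by simp
  show "AE x in lborel. norm (G s x) \<le> norm (\<theta> x)"
    using bd[OF s] by (auto intro!: always_eventually order_trans[OF _ abs_ge_self])
qed

lemma swap_lim:
  fixes G :: "real \<Rightarrow> real \<Rightarrow> real"
  assumes cont: "continuous_on S01 (\<lambda>p. G (fst p) (snd p))"
    and th: "integrable lborel \<theta>"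
    and bd: "\<And>s x. s \<in> {0..1} \<Longrightarrow> \<bar>G s x\<bar> \<le> \<theta> x"
    and ab: "0 \<le> a" "a \<le> b" "b \<le> 1"
  shows "(\<lambda>s. LINT x|lborel. G s x) integrable_on {a..b}"
    and "(\<lambda>n. integral {a..b} (\<lambda>s. integral {-real n..real n} (G s)))
            \<longlonglongrightarrow> integral {a..b} (\<lambda>s. LINT x|lborel. G s x)"
    and "\<And>n. integral {-real n..real n} (\<lambda>x. integral {a..b} (\<lambda>s. G s x))
            = integral {a..b} (\<lambda>s. integral {-real n..real n} (G s))"
proof -
  have sub: "{a..b} \<subseteq> {0..1}" using ab by auto
  have ci: "continuous_on (UNIV \<times> {a..b}) (\<lambda>(y, s). G s y)"
    by (rule cont_swap_sub[OF cont]) (use ab in auto)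
  have "continuous_on ({a..b} \<times> UNIV) (\<lambda>p. G (fst p) (snd p))"
    by (rule continuous_on_subset[OF cont]) (use sub in \<open>auto simp: S01_def\<close>)
  then have ci2: "continuous_on ({a..b} \<times> UNIV) (\<lambda>(s, y). G s y)"
    by (simp add: case_prod_beta)
  show "integral {-real n..real n} (\<lambda>x. integral {a..b} (\<lambda>s. G s x))
            = integral {a..b} (\<lambda>s. integral {-real n..real n} (G s))" for n
  proof -
    have "continuous_on (cbox (-real n, a) (real n, b)) (\<lambda>(x, s). G s x)"
      by (rule continuous_on_subset[OF ci]) (auto simp: cbox_Pair_eq)
    from integral_swap_continuous[OF this] show ?thesis by (simp add: cbox_interval)
  qed
  have intG: "\<And>s. s \<in> {0..1} \<Longrightarrow> integrable lborel (G s)"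
    by (rule slice_integrable[OF cont th bd])
  have fi: "(\<lambda>s. integral {-real n..real n} (G s)) integrable_on {a..b}" for n :: nat
  proof -
    have "continuous_on {a..b} (\<lambda>s. integral (cbox (-real n) (real n)) (G s))"
      by (rule integral_continuous_on_param)
         (rule continuous_on_subset[OF ci2], auto)
    then show ?thesis
      by (simp add: cbox_interval integrable_continuous_interval)
  qed
  have hi: "(\<lambda>s. LINT x|lborel. \<theta> x) integrable_on {a..b}" by (rule integrable_const_ivl)
  have le: "norm (integral {-real n..real n} (G s)) \<le> (LINT x|lborel. \<theta> x)"
    if s: "s \<in> {a..b}" for n :: nat and s
  proof -
    have s': "s \<in> {0..1}" using s sub by auto
    show ?thesis
      using int_ivl_bound[OF intG[OF s'] th bd[OF s']] by simp
  qed
  have cv: "(\<lambda>n. integral {-real n..real n} (G s)) \<longlonglongrightarrow> (LINT x|lborel. G s x)"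
    if s: "s \<in> {a..b}" for s
  proof -
    have s': "s \<in> {0..1}" using s sub by auto
    show ?thesis by (rule lim_nn[OF intG[OF s']])
  qed
  note DC = dominated_convergence[where f="\<lambda>n s. integral {-real n..real n} (G s)"
      and g="\<lambda>s. LINT x|lborel. G s x", OF fi hi le cv]
  have L: "(\<lambda>s. LINT x|lborel. G s x) integrable_on {a..b} \<and>
        (\<lambda>n. integral {a..b} (\<lambda>s. integral {-real n..real n} (G s)))
            \<longlonglongrightarrow> integral {a..b} (\<lambda>s. LINT x|lborel. G s x)"
    using DC by blast
  then show "(\<lambda>s. LINT x|lborel. G s x) integrable_on {a..b}"
    and "(\<lambda>n. integral {a..b} (\<lambda>s. integral {-real n..real n} (G s)))
            \<longlonglongrightarrow> integral {a..b} (\<lambda>s. LINT x|lborel. G s x)" by auto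
qed


lemma zero_seq_top:
  fixes \<psi> \<phi> :: "real \<Rightarrow> real"
  assumes d: "\<And>y. (\<psi> has_real_derivative \<phi> y) (at y)" and c\<phi>: "continuous_on UNIV \<phi>"
    and pos: "\<And>y. \<psi> y > 0" and int: "integrable lborel \<psi>"
  shows "\<exists>r. filterlim r at_top sequentially \<and> (\<lambda>n. \<phi> (r n)) \<longlonglongrightarrow> 0"
proof -
  have c\<psi>: "continuous_on UNIV \<psi>"
    using d by (intro DERIV_continuous_on) auto
  have key: "\<exists>y \<ge> real n. \<bar>\<phi> y\<bar> < 1 / real (Suc n)" for n
  proof (rule ccontr)
    define e where "e = 1 / real (Suc n)"
    have e: "e > 0" by (simp add: e_def)
    assume "\<not> (\<exists>y \<ge> real n. \<bar>\<phi> y\<bar> < 1 / real (Suc n))"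
    then have big: "\<And>y. y \<ge> real n \<Longrightarrow> \<bar>\<phi> y\<bar> \<ge> e" by (force simp: e_def)
    have sign: "(\<forall>y \<ge> real n. \<phi> y \<ge> e) \<or> (\<forall>y \<ge> real n. \<phi> y \<le> - e)"
    proof (rule ccontr)
      assume "\<not> ?thesis"
      then obtain y1 y2 where y1: "y1 \<ge> real n" "\<phi> y1 < e" and y2: "y2 \<ge> real n" "\<phi> y2 > - e"
        by force
      from big[OF y1(1)] y1(2) have p1: "\<phi> y1 \<le> - e" by linarith
      from big[OF y2(1)] y2(2) have p2: "\<phi> y2 \<ge> e" by linarith
      obtain z where z: "min y1 y2 \<le> z" "\<phi> z = 0"
      proof (cases "y1 \<le> y2")
        case True
        from IVT'[of \<phi> y1 0 y2] p1 p2 e True continuous_on_subset[OF c\<phi>]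
        obtain z where "y1 \<le> z" "\<phi> z = 0" by force
        then show ?thesis using that True by auto
      next
        case False
        from IVT2'[of \<phi> y1 0 y2] p1 p2 e False continuous_on_subset[OF c\<phi>]
        obtain z where "y2 \<le> z" "\<phi> z = 0" by force
        then show ?thesis using that False by auto
      qed
      have "z \<ge> real n" using z(1) y1(1) y2(1) by linarith
      from big[OF this] z(2) e show False by simp
    qed
    then show False
    proof
      assume A: "\<forall>y \<ge> real n. \<phi> y \<ge> e"
      have lin: "\<psi> y \<ge> e * (y - real n)" if y: "y \<ge> real n" for y
      proof -
        have "\<psi> (real n) - e * real n \<le> \<psi> y - e * y"
          by (rule DERIV_nonneg_imp_nondecreasing[OF y])
             (use A in \<open>auto intro!: derivative_eq_intros d\<close>)
        then show ?thesis using pos[of "real n"] by (simp add: algebra_simps)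
      qed
      have I0: "(LINT x|lborel. \<psi> x) \<ge> 0"
        using pos by (intro integral_nonneg_AE) (auto intro: less_imp_le)
      define K where "K = (LINT x|lborel. \<psi> x) + 1"
      define M where "M = real n + 1 / e"
      have K: "K > 0" using I0 by (simp add: K_def)
      have "K = integral {M..M+K} (\<lambda>_. 1::real)" using K by simp
      also have "\<dots> \<le> integral {M..M+K} \<psi>"
      proof (rule integral_le)
        show "\<psi> integrable_on {M..M + K}"
          by (rule integrable_continuous_interval, rule continuous_on_subset[OF c\<psi>]) auto
        fix y assume y: "y \<in> {M..M+K}"
        have "1 / e > 0" using e by simp
        then have "M \<ge> real n" by (simp add: M_def)
        then have "y \<ge> real n" using y by simp
        from lin[OF this] have "\<psi> y \<ge> e * (y - real n)" .
        moreover have "e * (y - real n) \<ge> e * (1 / e)"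
          using y e by (intro mult_left_mono) (auto simp: M_def)
        ultimately show "1 \<le> \<psi> y" using e by simp
      qed auto
      also have "\<dots> = (LINT x|lborel. indicator {M..M+K} x * \<psi> x)"
        by (rule int_as_lint[OF int])
      also have "\<dots> \<le> (LINT x|lborel. \<psi> x)"
        using integrable_mult_indicator[OF _ int, of "{M..M+K}"] int pos
        by (intro integral_mono) (auto split: split_indicator intro: less_imp_le)
      finally show False by (simp add: K_def)
    next
      assume B: "\<forall>y \<ge> real n. \<phi> y \<le> - e"
      have lin: "\<psi> y \<le> \<psi> (real n) - e * (y - real n)" if y: "y \<ge> real n" for y
      proof -
        have "- \<psi> (real n) - e * real n \<le> - \<psi> y - e * y"
          by (rule DERIV_nonneg_imp_nondecreasing[OF y])
             (rule_tac x="- \<phi> x - e" in exI, use B in \<open>auto intro!: derivative_eq_intros d\<close>)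
        then show ?thesis by (simp add: algebra_simps)
      qed
      define y where "y = real n + \<psi> (real n) / e"
      have "y \<ge> real n" using e pos[of "real n"] by (simp add: y_def)
      from lin[OF this] have "\<psi> y \<le> 0" using e by (simp add: y_def)
      with pos[of y] show False by simp
    qed
  qed
  then obtain r where r: "\<And>n. r n \<ge> real n \<and> \<bar>\<phi> (r n)\<bar> < 1 / real (Suc n)" by metis
  have "filterlim r at_top sequentially"
    by (rule filterlim_at_top_mono[OF filterlim_real_sequentially]) (use r in auto)
  moreover have "(\<lambda>n. \<phi> (r n)) \<longlonglongrightarrow> 0"
    by (rule LIMSEQ_norm_0) (use r in auto)
  ultimately show ?thesis by blast
qed

lemma zero_seq_bot:
  fixes \<psi> \<phi> :: "real \<Rightarrow> real"
  assumes d: "\<And>y. (\<psi> has_real_derivative \<phi> y) (at y)" and c\<phi>: "continuous_on UNIV \<phi>"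
    and pos: "\<And>y. \<psi> y > 0" and int: "integrable lborel \<psi>"
  shows "\<exists>l. filterlim l at_bot sequentially \<and> (\<lambda>n. \<phi> (l n)) \<longlonglongrightarrow> 0"
proof -
  have "\<exists>r. filterlim r at_top sequentially \<and> (\<lambda>n. - \<phi> (- r n)) \<longlonglongrightarrow> 0"
  proof (rule zero_seq_top[where \<psi>="\<lambda>y. \<psi> (- y)"])
    show "((\<lambda>y. \<psi> (- y)) has_real_derivative - \<phi> (- y)) (at y)" for y
      using DERIV_chain2[OF d DERIV_minus[OF DERIV_ident], of y] by simp
    show "continuous_on UNIV (\<lambda>y. - \<phi> (- y))"
      by (intro continuous_intros continuous_on_compose2[OF c\<phi>]) auto
    show "integrable lborel (\<lambda>y. \<psi> (- y))"
      using lborel_integrable_real_affine[OF int, of "-1" 0] by simp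
  qed (use pos in auto)
  then obtain r where r: "filterlim r at_top sequentially" "(\<lambda>n. - \<phi> (- r n)) \<longlonglongrightarrow> 0" by blast
  have "filterlim (\<lambda>n. - r n) at_bot sequentially"
    using r(1) by (simp add: filterlim_uminus_at_bot)
  moreover have "(\<lambda>n. \<phi> (- r n)) \<longlonglongrightarrow> 0"
    using tendsto_minus[OF r(2)] by simp
  ultimately show ?thesis by blast
qed


locale setting2 = setting F f v \<alpha> \<alpha>'
  for F f v \<alpha> \<alpha>' +
  fixes \<theta>A \<theta>B :: "real \<Rightarrow> real"
  assumes dens_int: "\<And>t. t \<in> {0..1} \<Longrightarrow> integrable lborel (\<lambda>x. f t x)"
    and alpha_mono: "mono_on {0..1} \<alpha>"
    and thA_int: "integrable lborel \<theta>A"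
    and thB_int: "integrable lborel \<theta>B"
    and boundA: "\<And>t x. t \<in> {0..1} \<Longrightarrow>
          \<bar>pdx (gfun v \<alpha> f) t x * (1 + ln (f t x))\<bar> \<le> \<theta>A x"
    and boundB: "\<And>t x. t \<in> {0..1} \<Longrightarrow>
          \<bar>pdx (pdx (hfun v \<alpha> \<alpha>' f)) t x * ln (f t x)
             + (pdx (gfun v \<alpha> f) t x)\<^sup>2 / f t x\<bar> \<le> \<theta>B x"
    and van_g: "\<And>t. t \<in> {0..1} \<Longrightarrow> vanishes_at_infinity (\<lambda>x. gfun v \<alpha> f t x)"
    and van_h: "\<And>t. t \<in> {0..1} \<Longrightarrow>
          vanishes_at_infinity (\<lambda>x. pdx (hfun v \<alpha> \<alpha>' f) t x * ln (f t x))"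
    and van_hf: "\<And>t. t \<in> {0..1} \<Longrightarrow>
          vanishes_at_infinity (\<lambda>x. hfun v \<alpha> \<alpha>' f t x / f t x * pdx f t x)"
    and van_gf: "\<And>t. t \<in> {0..1} \<Longrightarrow>
          vanishes_at_infinity (\<lambda>x. (gfun v \<alpha> f t x / f t x)\<^sup>2 * pdx f t x)"
    and ent: "\<And>t. t \<in> {0..1} \<Longrightarrow> integrable lborel (\<lambda>x. f t x * ln (f t x))"
begin

lemma bA: "s \<in> {0..1} \<Longrightarrow> \<bar>Aint s x\<bar> \<le> \<theta>A x"
  unfolding Aint_def by (rule boundA)

lemma bB: "s \<in> {0..1} \<Longrightarrow> \<bar>Bint s x\<bar> \<le> \<theta>B x"
  unfolding Bint_def by (rule boundB)

lemma intA: "s \<in> {0..1} \<Longrightarrow> integrable lborel (Aint s)"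
  by (rule slice_integrable[OF cA thA_int bA])

lemma intB: "s \<in> {0..1} \<Longrightarrow> integrable lborel (Bint s)"
  by (rule slice_integrable[OF cB thB_int bB])

definition "Dfun s = (LINT x|lborel. Aint s x)"
definition "Efun s = (LINT x|lborel. Bint s x)"

lemma stepA:
  assumes ab: "0 \<le> a" "a \<le> b" "b \<le> 1"
  shows "Dfun integrable_on {a..b}" "entropy f b - entropy f a = integral {a..b} Dfun"
proof -
  have aI: "a \<in> {0..1}" and bI: "b \<in> {0..1}" using ab by auto
  define W where "W x = integral {a..b} (\<lambda>s. Aint s x)" for x
  have pw: "f a x * ln (f a x) - f b x * ln (f b x) = W x" for x
  proof -
    have "((\<lambda>s. - Aint s x) has_integral (f b x * ln (f b x) - f a x * ln (f a x))) {a..b}"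
      by (rule ftc_t[where u="\<lambda>s. f s x * ln (f s x)"]) (use dA ab in auto)
    from has_integral_neg[OF this] have "((\<lambda>s. Aint s x) has_integral
        (f a x * ln (f a x) - f b x * ln (f b x))) {a..b}" by simp
    then show ?thesis unfolding W_def by (simp add: integral_unique)
  qed
  have Wint: "integrable lborel W"
  proof -
    have "integrable lborel (\<lambda>x. f a x * ln (f a x) - f b x * ln (f b x))"
      using ent[OF aI] ent[OF bI] by simp
    then show ?thesis using pw by simp
  qed
  have ent_eq: "entropy f b - entropy f a = (LINT x|lborel. W x)"
  proof -
    have "entropy f b - entropy f a = (LINT x|lborel. f a x * ln (f a x) - f b x * ln (f b x))"
      unfolding entropy_def using ent[OF aI] ent[OF bI] by simp
    then show ?thesis using pw by simp
  qed
  have L1: "(\<lambda>n. integral {-real n..real n} W) \<longlonglongrightarrow> (LINT x|lborel. W x)"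
    by (rule lim_nn[OF Wint])
  have L2: "(\<lambda>n. integral {-real n..real n} W) \<longlonglongrightarrow> integral {a..b} Dfun"
  proof -
    note sw = swap_lim(3)[OF cA thA_int bA ab]
    have "(\<lambda>n. integral {-real n..real n} W) = (\<lambda>n. integral {a..b} (\<lambda>s. integral {-real n..real n} (Aint s)))"
      unfolding W_def using sw by presburger
    then show ?thesis unfolding Dfun_def using swap_lim(2)[OF cA thA_int bA ab] by simp
  qed
  show "Dfun integrable_on {a..b}"
    unfolding Dfun_def by (rule swap_lim(1)[OF cA thA_int bA ab])
  show "entropy f b - entropy f a = integral {a..b} Dfun"
    using LIMSEQ_unique[OF L1 L2] ent_eq by simp
qed

lemma cG: "continuous_on S01 (\<lambda>p. pdx (gfun v \<alpha> f) (fst p) (snd p))"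
proof -
  have "continuous_on S01 (\<lambda>p. v * pdx f (fst p) (snd p) + \<alpha> (fst p) * pdx (pdx f) (fst p) (snd p))"
    by (intro continuous_intros c1 c2 calpha)
  then show ?thesis
    by (rule continuous_on_cong[THEN iffD1, rotated 2]) (auto simp: S01_def G1)
qed

lemma cK: "continuous_on S01 (\<lambda>p. pdx (gfun v \<alpha> f) (fst p) (snd p) * ln (f (fst p) (snd p)))"
  by (intro continuous_intros cG c0) (auto dest: pS)

lemma intI:
  fixes G :: "real \<Rightarrow> real \<Rightarrow> real"
  assumes c: "continuous_on S01 (\<lambda>p. G (fst p) (snd p))" and s: "s \<in> {0..1}"
  shows "G s integrable_on {l..r}"
proof -
  have "continuous_on {l..r} (\<lambda>y. G s y)"
    using continuous_on_subset[OF cont_slice_x[OF c s], of "{l..r}"] by simp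
  then show ?thesis using integrable_continuous_interval by fastforce
qed

lemma van_seq:
  assumes "vanishes_at_infinity u"
  shows "(\<lambda>n. u (real n)) \<longlonglongrightarrow> 0" "(\<lambda>n. u (- real n)) \<longlonglongrightarrow> 0"
proof -
  have "filterlim (\<lambda>n. - real n) at_bot sequentially"
    by (simp add: filterlim_uminus_at_bot filterlim_real_sequentially)
  then show "(\<lambda>n. u (- real n)) \<longlonglongrightarrow> 0"
    using assms unfolding vanishes_at_infinity_def by (auto intro: filterlim_compose)
  show "(\<lambda>n. u (real n)) \<longlonglongrightarrow> 0"
    using assms filterlim_real_sequentially unfolding vanishes_at_infinity_def
    by (auto intro: filterlim_compose)
qed

lemma stepB:
  assumes ab: "0 \<le> a" "a \<le> b" "b \<le> 1"
  shows "Dfun b - Dfun a = - integral {a..b} Efun"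
proof -
  have aI: "a \<in> {0..1}" and bI: "b \<in> {0..1}" using ab by auto
  define Kf where "Kf s x = pdx (gfun v \<alpha> f) s x * ln (f s x)" for s x
  have I12: "integral {-real n..real n} (Aint s) =
       (gfun v \<alpha> f s (real n) - gfun v \<alpha> f s (- real n)) + integral {-real n..real n} (Kf s)"
    if s: "s \<in> {0..1}" for s n
  proof -
    have eq: "Aint s = (\<lambda>x. pdx (gfun v \<alpha> f) s x + Kf s x)"
      by (auto simp: Aint_def Kf_def algebra_simps)
    have i1: "pdx (gfun v \<alpha> f) s integrable_on {-real n..real n}" by (rule intI[OF cG s])
    have i2: "Kf s integrable_on {-real n..real n}" unfolding Kf_def by (rule intI[OF cK s])
    have ftc: "((pdx (gfun v \<alpha> f) s) has_integral (gfun v \<alpha> f s (real n) - gfun v \<alpha> f s (- real n))) {-real n..real n}"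
    proof (rule fundamental_theorem_of_calculus)
      fix y assume "y \<in> {-real n..real n}"
      have "((\<lambda>y. gfun v \<alpha> f s y) has_real_derivative pdx (gfun v \<alpha> f) s y) (at y within {-real n..real n})"
        by (rule has_field_derivative_at_within[OF gder'[OF s]])
      then show "((gfun v \<alpha> f s) has_vector_derivative pdx (gfun v \<alpha> f) s y) (at y within {-real n..real n})"
        by (simp add: has_real_derivative_iff_has_vector_derivative)
    qed simp
    show ?thesis unfolding eq
      using integral_add[OF i1 i2] integral_unique[OF ftc] by simp
  qed
  have I3: "integral {-real n..real n} (Kf b) - integral {-real n..real n} (Kf a) =
       - integral {a..b} (\<lambda>s. integral {-real n..real n} (Bint s))" for n
  proof -
    have pw: "Kf b x - Kf a x = - integral {a..b} (\<lambda>s. Bint s x)" for x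
    proof -
      have "((\<lambda>s. - Bint s x) has_integral (Kf b x - Kf a x)) {a..b}"
        unfolding Kf_def by (rule ftc_t[where u="\<lambda>s. pdx (gfun v \<alpha> f) s x * ln (f s x)"]) (use dK ab in auto)
      from has_integral_neg[OF this] show ?thesis by (simp add: integral_unique)
    qed
    have i2: "Kf s integrable_on {-real n..real n}" if "s \<in> {0..1}" for s
      unfolding Kf_def by (rule intI[OF cK that])
    have "integral {-real n..real n} (Kf b) - integral {-real n..real n} (Kf a)
        = integral {-real n..real n} (\<lambda>x. Kf b x - Kf a x)"
      using integral_diff[OF i2[OF bI] i2[OF aI]] by simp
    also have "\<dots> = integral {-real n..real n} (\<lambda>x. - integral {a..b} (\<lambda>s. Bint s x))"
      by (simp add: pw)
    also have "\<dots> = - integral {-real n..real n} (\<lambda>x. integral {a..b} (\<lambda>s. Bint s x))"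
      by (rule integral_neg)
    also have "\<dots> = - integral {a..b} (\<lambda>s. integral {-real n..real n} (Bint s))"
      using swap_lim(3)[OF cB thB_int bB ab] by presburger
    finally show ?thesis .
  qed
  have E: "integral {-real n..real n} (Aint b) - integral {-real n..real n} (Aint a) =
      ((gfun v \<alpha> f b (real n) - gfun v \<alpha> f b (- real n)) - (gfun v \<alpha> f a (real n) - gfun v \<alpha> f a (- real n)))
      - integral {a..b} (\<lambda>s. integral {-real n..real n} (Bint s))" for n
    using I12[OF aI, of n] I12[OF bI, of n] I3[of n] by simp
  have L1: "(\<lambda>n. integral {-real n..real n} (Aint b) - integral {-real n..real n} (Aint a))
      \<longlonglongrightarrow> Dfun b - Dfun a"
    unfolding Dfun_def by (intro tendsto_diff lim_nn intA aI bI)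
  have L2: "(\<lambda>n. ((gfun v \<alpha> f b (real n) - gfun v \<alpha> f b (- real n)) - (gfun v \<alpha> f a (real n) - gfun v \<alpha> f a (- real n)))
      - integral {a..b} (\<lambda>s. integral {-real n..real n} (Bint s))) \<longlonglongrightarrow> ((0 - 0) - (0 - 0)) - integral {a..b} Efun"
    unfolding Efun_def
    by (intro tendsto_diff van_seq van_g aI bI swap_lim(2)[OF cB thB_int bB ab])
  show ?thesis using LIMSEQ_unique[OF L1 L2[folded E]] by simp
qed

lemma stepC:
  assumes s: "s \<in> {0..1}"
  shows "Efun s \<ge> 0"
proof -
  have ap: "\<alpha>' s \<ge> 0" by (rule mono_deriv_nonneg[OF alpha_mono ad[OF s] s])
  have c1s: "continuous_on UNIV (pdx f s)"
    using cont_slice_x[OF c1 s] by simp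
  obtain r where r: "filterlim r at_top sequentially" "(\<lambda>n. pdx f s (r n)) \<longlonglongrightarrow> 0"
    using zero_seq_top[where \<psi>="f s" and \<phi>="pdx f s", OF dx0[OF s] c1s pos[OF s] dens_int[OF s]] by blast
  obtain l where l: "filterlim l at_bot sequentially" "(\<lambda>n. pdx f s (l n)) \<longlonglongrightarrow> 0"
    using zero_seq_bot[where \<psi>="f s" and \<phi>="pdx f s", OF dx0[OF s] c1s pos[OF s] dens_int[OF s]] by blast
  have LB: "(\<lambda>n. integral {l n..r n} (Bint s)) \<longlonglongrightarrow> Efun s"
    unfolding Efun_def by (rule lim_ivl[OF intB[OF s] l(1) r(1)])
  have Qlim: "(\<lambda>n. Qf s (r n) - Qf s (l n)) \<longlonglongrightarrow> 0"
  proof -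
    have top: "(\<lambda>n. u (r n)) \<longlonglongrightarrow> 0" if "vanishes_at_infinity u" for u
      using that r(1) unfolding vanishes_at_infinity_def by (auto intro: filterlim_compose)
    have bot: "(\<lambda>n. u (l n)) \<longlonglongrightarrow> 0" if "vanishes_at_infinity u" for u
      using that l(1) unfolding vanishes_at_infinity_def by (auto intro: filterlim_compose)
    have "(\<lambda>n. Qf s (r n) - Qf s (l n)) \<longlonglongrightarrow> ((0 - 0 + 0 - \<alpha>' s * 0) - (0 - 0 + 0 - \<alpha>' s * 0))"
      unfolding Qf_def
      by (intro tendsto_intros top bot van_h van_hf van_gf s r(2) l(2))
    then show ?thesis by simp
  qed
  have ev: "eventually (\<lambda>n. Qf s (r n) - Qf s (l n) \<le> integral {l n..r n} (Bint s)) sequentially"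
  proof -
    have "eventually (\<lambda>n. l n \<le> 0) sequentially" using l(1) by (simp add: filterlim_at_bot)
    moreover have "eventually (\<lambda>n. 0 \<le> r n) sequentially" using r(1) by (simp add: filterlim_at_top)
    ultimately show ?thesis
    proof eventually_elim
      case (elim n)
      then have lr: "l n \<le> r n" by simp
      have ftc: "((\<lambda>y. Bint s y - Pf s y) has_integral (Qf s (r n) - Qf s (l n))) {l n..r n}"
      proof (rule fundamental_theorem_of_calculus[OF lr])
        fix y assume "y \<in> {l n..r n}"
        have "((\<lambda>y. Qf s y) has_real_derivative Bint s y - Pf s y) (at y within {l n..r n})"
          by (rule has_field_derivative_at_within[OF Qder[OF s]])
        then show "((Qf s) has_vector_derivative Bint s y - Pf s y) (at y within {l n..r n})"
          by (simp add: has_real_derivative_iff_has_vector_derivative)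
      qed
      have iB: "Bint s integrable_on {l n..r n}" by (rule intI[OF cB s])
      have iP: "Pf s integrable_on {l n..r n}"
      proof -
        have "(\<lambda>y. Bint s y - (Bint s y - Pf s y)) integrable_on {l n..r n}"
          by (rule integrable_diff[OF iB]) (use ftc in blast)
        then show ?thesis by simp
      qed
      have "integral {l n..r n} (Bint s) = integral {l n..r n} (\<lambda>y. Bint s y - Pf s y) + integral {l n..r n} (Pf s)"
        using integral_diff[OF iB iP] by simp
      also have "\<dots> = (Qf s (r n) - Qf s (l n)) + integral {l n..r n} (Pf s)"
        using integral_unique[OF ftc] by simp
      finally have eq: "integral {l n..r n} (Bint s) = (Qf s (r n) - Qf s (l n)) + integral {l n..r n} (Pf s)" .
      have "integral {l n..r n} (Pf s) \<ge> 0"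
        by (rule integral_nonneg[OF iP]) (use Pf_nonneg[OF ap s] in auto)
      then show ?case using eq by simp
    qed
  qed
  show ?thesis
    using tendsto_le[OF trivial_limit_sequentially LB Qlim ev] .
qed

end


lemma concave_from_int:
  fixes H D :: "real \<Rightarrow> real"
  assumes I: "\<And>a b. 0 \<le> a \<Longrightarrow> a \<le> b \<Longrightarrow> b \<le> 1 \<Longrightarrow> D integrable_on {a..b} \<and> H b - H a = integral {a..b} D"
    and M: "\<And>a b. 0 \<le> a \<Longrightarrow> a \<le> b \<Longrightarrow> b \<le> 1 \<Longrightarrow> D b \<le> D a"
  shows "concave_on {0..1} H"
proof (rule concave_on_linorderI)
  show "convex {0..1::real}" by (rule convex_real_interval)
next
  fix t x y :: real
  assume t: "0 < t" "t < 1" and xy: "x \<in> {0..1}" "y \<in> {0..1}" "x < y"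
  define z where "z = (1 - t) * x + t * y"
  have zx: "z - x = t * (y - x)" by (simp add: z_def algebra_simps)
  have yz: "y - z = (1 - t) * (y - x)" by (simp add: z_def algebra_simps)
  have "t * (y - x) \<ge> 0" using t xy by simp
  then have xz: "x \<le> z" using zx by simp
  have "(1 - t) * (y - x) \<ge> 0" using t xy by simp
  then have zy: "z \<le> y" using yz by simp
  have 1: "H z - H x \<ge> (z - x) * D z"
  proof -
    from I[of x z] xy xz zy have i: "D integrable_on {x..z}" "H z - H x = integral {x..z} D" by auto
    have "integral {x..z} (\<lambda>_. D z) \<le> integral {x..z} D"
      by (rule integral_le[OF _ i(1)]) (use M xy xz zy in auto)
    then show ?thesis using i(2) xz by simp
  qed
  have 2: "H y - H z \<le> (y - z) * D z"
  proof -
    from I[of z y] xy xz zy have i: "D integrable_on {z..y}" "H y - H z = integral {z..y} D" by auto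
    have "integral {z..y} D \<le> integral {z..y} (\<lambda>_. D z)"
      by (rule integral_le[OF i(1)]) (use M xy xz zy in auto)
    then show ?thesis using i(2) zy by simp
  qed
  have A: "(1 - t) * (H z - H x) \<ge> (1 - t) * (t * (y - x) * D z)"
    using 1 zx t by (intro mult_left_mono) auto
  have B: "t * (H y - H z) \<le> t * ((1 - t) * (y - x) * D z)"
    using 2 yz t by (intro mult_left_mono) auto
  have C: "(1 - t) * (t * (y - x) * D z) = t * ((1 - t) * (y - x) * D z)" by simp
  have "H z \<ge> (1 - t) * H x + t * H y"
    using A B C by (simp add: algebra_simps)
  then show "H ((1 - t) *\<^sub>R x + t *\<^sub>R y) \<ge> (1 - t) * H x + t * H y"
    by (simp add: z_def)
qed

context setting2
begin

lemma concave: "concave_on {0..1} (entropy f)"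
proof (rule concave_from_int[where D=Dfun])
  fix a b :: real assume ab: "0 \<le> a" "a \<le> b" "b \<le> 1"
  show "Dfun integrable_on {a..b} \<and> entropy f b - entropy f a = integral {a..b} Dfun"
    using stepA[OF ab] by blast
  have "integral {a..b} Efun \<ge> 0"
    by (rule integral_nonneg[OF swap_lim(1)[OF cB thB_int bB ab, folded Efun_def]])
       (use stepC ab in auto)
  then show "Dfun b \<le> Dfun a" using stepB[OF ab] by simp
qed

end

theorem theorem2p6:
  fixes f :: "real \<Rightarrow> real \<Rightarrow> real" and v :: real
    and \<alpha> \<alpha>' :: "real \<Rightarrow> real" and \<theta>A \<theta>B :: "real \<Rightarrow> real"
  assumes smooth: "smooth2_on ({0..1} \<times> UNIV) f"
    and pos: "\<And>t x. t \<in> {0..1} \<Longrightarrow> f t x > 0"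
    and dens_int: "\<And>t. t \<in> {0..1} \<Longrightarrow> integrable lborel (\<lambda>x. f t x)"
    and dens_one: "\<And>t. t \<in> {0..1} \<Longrightarrow> (LINT x|lborel. f t x) = 1"
    and alpha_mono: "mono_on {0..1} \<alpha>"
    and alpha_deriv: "\<And>t. t \<in> {0..1} \<Longrightarrow> (\<alpha> has_real_derivative \<alpha>' t) (at t within {0..1})"
    and alpha_C1: "continuous_on {0..1} \<alpha>'"
    and transport: "\<And>t x. t \<in> {0..1} \<Longrightarrow>
          ((\<lambda>s. f s x) has_real_derivative - pdx (gfun v \<alpha> f) t x) (at t within {0..1})"
    and thA_int: "integrable lborel \<theta>A"
    and thB_int: "integrable lborel \<theta>B"
    and boundA: "\<And>t x. t \<in> {0..1} \<Longrightarrow>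
          \<bar>pdx (gfun v \<alpha> f) t x * (1 + ln (f t x))\<bar> \<le> \<theta>A x"
    and boundB: "\<And>t x. t \<in> {0..1} \<Longrightarrow>
          \<bar>pdx (pdx (hfun v \<alpha> \<alpha>' f)) t x * ln (f t x)
             + (pdx (gfun v \<alpha> f) t x)\<^sup>2 / f t x\<bar> \<le> \<theta>B x"
    and van_g: "\<And>t. t \<in> {0..1} \<Longrightarrow> vanishes_at_infinity (\<lambda>x. gfun v \<alpha> f t x)"
    and van_h: "\<And>t. t \<in> {0..1} \<Longrightarrow>
          vanishes_at_infinity (\<lambda>x. pdx (hfun v \<alpha> \<alpha>' f) t x * ln (f t x))"
    and van_hf: "\<And>t. t \<in> {0..1} \<Longrightarrow>
          vanishes_at_infinity (\<lambda>x. hfun v \<alpha> \<alpha>' f t x / f t x * pdx f t x)"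
    and van_gf: "\<And>t. t \<in> {0..1} \<Longrightarrow>
          vanishes_at_infinity (\<lambda>x. (gfun v \<alpha> f t x / f t x)\<^sup>2 * pdx f t x)"
    and entropy_exists: "\<And>t. t \<in> {0..1} \<Longrightarrow> integrable lborel (\<lambda>x. f t x * ln (f t x))"
  shows "concave_on {0..1} (entropy f)"
proof -
  obtain F where FP: "FP F" and sf: "smF F f" using smooth_FP[OF smooth] by blast
  interpret S: setting2 F f v \<alpha> \<alpha>' \<theta>A \<theta>B
  proof (unfold_locales)
  qed (use FP sf pos dens_int alpha_mono alpha_deriv alpha_C1 transport thA_int thB_int boundA boundB
        van_g van_h van_hf van_gf entropy_exists in auto)
  show ?thesis by (rule S.concave)
qed

end
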